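(* For every $\lambda\in\mathbb{C}$, $$\det\left(\mathbf{P}_4^{-1}\mathbf{K}-\lambda I_{2m+n}\right)=(1-\lambda)^{2m}\det\left(B^{-1}H-\lambda I_n\right).$$ Consequently the eigenvalues of $\mathbf{P}_4^{-1}\mathbf{K}$ are $1$ with algebraic multiplicity (at least) $2m$ together with the eigenvalues of $B^{-1}H$ (counted with algebraic multiplicity).
   Context: Let $m,n\ge 1$. Let $R_u\in\mathbb{R}^{m\times m}$ be invertible, $R_z\in\mathbb{R}^{m\times n}$, $L_{uu}\in\mathbb{R}^{m\times m}$ symmetric, $L_{uz}\in\mathbb{R}^{m\times n}$, $L_{zu}:=L_{uz}^T$, $L_{zz}\in\mathbb{R}^{n\times n}$ symmetric, and $B\in\mathbb{R}^{n\times n}$ invertible. Write $R_u^{-T}:=(R_u^{-1})^T$. Define $L_{yy}:=L_{uz}-L_{uu}R_u^{-1}R_z$ and the reduced Hessian $H:=L_{zz}-L_{zu}R_u^{-1}R_z-R_z^TR_u^{-T}L_{uz}+R_z^TR_u^{-T}L_{uu}R_u^{-1}R_z$. The KKT matrix is $\mathbf{K}:=\begin{bmatrix} L_{uu} & L_{uz} & R_u^T\\ L_{zu} & L_{zz} & R_z^T\\ R_u & R_z & 0\end{bmatrix}$. The preconditioner is $\mathbf{P}_4:=\mathbf{K}_1\mathbf{K}_2$ where $\mathbf{K}_1=\begin{bmatrix} L_{uu}R_u^{-1} & 0 & I_m\\ L_{zu}R_u^{-1} & I_n & R_z^TR_u^{-T}\\ I_m & 0 & 0\end{bmatrix}$ and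 $\mathbf{K}_2=\begin{bmatrix} R_u & R_z & 0\\ 0 & B & 0\\ 0 & L_{yy} & R_u^T\end{bmatrix}$. *)

theory Defs
  imports "Jordan_Normal_Form.Determinant" "Jordan_Normal_Form.Char_Poly"
begin

(* inverse of a square matrix (meaningful when the matrix is invertible) *)
definition inv_mat :: "'a :: field mat \<Rightarrow> 'a mat" where
  "inv_mat A = (THE B. B \<in> carrier_mat (dim_row A) (dim_row A) \<and>
       A * B = 1\<^sub>m (dim_row A) \<and> B * A = 1\<^sub>m (dim_row A))"

(* horizontal concatenation [A B] *)
definition hcat :: "'a :: zero mat \<Rightarrow> 'a mat \<Rightarrow> 'a mat" where
  "hcat A B = four_block_mat A B (0\<^sub>m 0 (dim_col A)) (0\<^sub>m 0 (dim_col B))"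

(* 3x3 block matrix [A11 A12 A13; A21 A22 A23; A31 A32 A33] *)
definition block3 :: "'a :: zero mat \<Rightarrow> 'a mat \<Rightarrow> 'a mat \<Rightarrow> 'a mat \<Rightarrow> 'a mat \<Rightarrow> 'a mat
    \<Rightarrow> 'a mat \<Rightarrow> 'a mat \<Rightarrow> 'a mat \<Rightarrow> 'a mat" where
  "block3 A11 A12 A13 A21 A22 A23 A31 A32 A33 =
     four_block_mat (four_block_mat A11 A12 A21 A22) (A13 @\<^sub>r A23) (hcat A31 A32) A33"

end

theory Submission
  imports Defs
begin


lemma sum_lessThan_add_nat: "sum (f::nat\<Rightarrow>'a::comm_monoid_add) {..<a+b} = sum f {..<a} + sum (\<lambda>k. f (a+k)) {..<b}"
  by (induction b) (auto simp: add_ac)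

lemma block3_carrier:
  assumes "A11 \<in> carrier_mat r1 s1" "A12 \<in> carrier_mat r1 s2" "A13 \<in> carrier_mat r1 s3"
    "A21 \<in> carrier_mat r2 s1" "A22 \<in> carrier_mat r2 s2" "A23 \<in> carrier_mat r2 s3"
    "A31 \<in> carrier_mat r3 s1" "A32 \<in> carrier_mat r3 s2" "A33 \<in> carrier_mat r3 s3"
  shows "block3 A11 A12 A13 A21 A22 A23 A31 A32 A33 \<in> carrier_mat (r1+r2+r3) (s1+s2+s3)"
  using assms unfolding block3_def hcat_def append_rows_def carrier_mat_def by simp

lemma append_rows_index: "A \<in> carrier_mat r1 s \<Longrightarrow> B \<in> carrier_mat r2 s \<Longrightarrow> i < r1 + r2 \<Longrightarrow> j < s \<Longrightarrow>
  (A @\<^sub>r B) $$ (i,j) = (if i < r1 then A $$ (i,j) else B $$ (i - r1, j))"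
  unfolding append_rows_def by (subst index_mat_four_block, auto)

lemma hcat_index: "A \<in> carrier_mat r s1 \<Longrightarrow> B \<in> carrier_mat r s2 \<Longrightarrow> i < r \<Longrightarrow> j < s1 + s2 \<Longrightarrow>
  (hcat A B) $$ (i,j) = (if j < s1 then A $$ (i,j) else B $$ (i, j - s1))"
  unfolding hcat_def by (subst index_mat_four_block, auto)

lemma fb_index: "A \<in> carrier_mat r1 s1 \<Longrightarrow> D \<in> carrier_mat r2 s2 \<Longrightarrow> i < r1 + r2 \<Longrightarrow> j < s1 + s2 \<Longrightarrow>
  four_block_mat A B C D $$ (i,j) = (if i < r1 then if j < s1 then A $$ (i,j) else B $$ (i,j - s1)
      else if j < s1 then C $$ (i - r1, j) else D $$ (i - r1, j - s1))"
  by (subst index_mat_four_block, auto)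

lemma block3_index:
  assumes a: "A11 \<in> carrier_mat r1 s1" "A12 \<in> carrier_mat r1 s2" "A13 \<in> carrier_mat r1 s3"
    "A21 \<in> carrier_mat r2 s1" "A22 \<in> carrier_mat r2 s2" "A23 \<in> carrier_mat r2 s3"
    "A31 \<in> carrier_mat r3 s1" "A32 \<in> carrier_mat r3 s2" "A33 \<in> carrier_mat r3 s3"
   and ij: "i < r1+r2+r3" "j < s1+s2+s3"
  shows "block3 A11 A12 A13 A21 A22 A23 A31 A32 A33 $$ (i,j) =
    (if i < r1 then (if j < s1 then A11 $$ (i,j) else if j < s1+s2 then A12 $$ (i,j-s1) else A13 $$ (i,j-s1-s2))
     else if i < r1+r2 then (if j < s1 then A21 $$ (i-r1,j) else if j < s1+s2 then A22 $$ (i-r1,j-s1) else A23 $$ (i-r1,j-s1-s2))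
     else (if j < s1 then A31 $$ (i-r1-r2,j) else if j < s1+s2 then A32 $$ (i-r1-r2,j-s1) else A33 $$ (i-r1-r2,j-s1-s2)))"
proof -
  have P: "four_block_mat A11 A12 A21 A22 \<in> carrier_mat (r1+r2) (s1+s2)" using a by simp
  have e: "block3 A11 A12 A13 A21 A22 A23 A31 A32 A33 $$ (i,j) =
    (if i < r1+r2 then if j < s1+s2 then four_block_mat A11 A12 A21 A22 $$ (i,j) else (A13 @\<^sub>r A23) $$ (i,j - (s1+s2))
      else if j < s1+s2 then hcat A31 A32 $$ (i - (r1+r2), j) else A33 $$ (i - (r1+r2), j - (s1+s2)))"
    unfolding block3_def by (rule fb_index[OF P a(9)], insert ij, auto)
  show ?thesis unfolding e
    using ij a
    by (cases "i < r1"; cases "i < r1+r2"; cases "j < s1"; cases "j < s1+s2";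
        simp add: fb_index[OF a(1) a(5)] append_rows_index[OF a(3) a(6)] hcat_index[OF a(7) a(8)] diff_diff_add)
qed



lemma mult_index_sum': "i < dim_row M \<Longrightarrow> j < dim_col N \<Longrightarrow> dim_col M = dim_row N \<Longrightarrow>
   (M * N) $$ (i,j) = (\<Sum>k<dim_col M. M $$ (i,k) * N $$ (k,j))"
  by (auto simp: scalar_prod_def lessThan_atLeast0 intro!: sum.cong)

lemma trip_index: "i < dim_row X \<Longrightarrow> j < dim_col Y \<Longrightarrow> dim_col X = dim_row Y \<Longrightarrow>
  dim_row Z = dim_row X \<Longrightarrow> dim_col W = dim_col Y \<Longrightarrow> dim_col Z = dim_row W \<Longrightarrow>
  dim_row U = dim_row X \<Longrightarrow> dim_col V = dim_col Y \<Longrightarrow> dim_col U = dim_row V \<Longrightarrow>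
  (X * Y + Z * W + U * V) $$ (i,j) = (\<Sum>k<dim_col X. X $$ (i,k) * Y $$ (k,j)) + (\<Sum>k<dim_col Z. Z $$ (i,k) * W $$ (k,j))
    + (\<Sum>k<dim_col U. U $$ (i,k) * V $$ (k,j))"
  using mult_index_sum'[of i X j Y] mult_index_sum'[of i Z j W] mult_index_sum'[of i U j V] by simp

lemma trip_c: "X \<in> carrier_mat r s1 \<Longrightarrow> Y \<in> carrier_mat s1 t \<Longrightarrow> Z \<in> carrier_mat r s2 \<Longrightarrow> W \<in> carrier_mat s2 t \<Longrightarrow>
  U \<in> carrier_mat r s3 \<Longrightarrow> V \<in> carrier_mat s3 t \<Longrightarrow> i < r \<Longrightarrow> j < t \<Longrightarrow>
  (X * Y + Z * W + U * V) $$ (i,j) = (\<Sum>k<s1. X $$ (i,k) * Y $$ (k,j)) + (\<Sum>k<s2. Z $$ (i,k) * W $$ (k,j))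
    + (\<Sum>k<s3. U $$ (i,k) * V $$ (k,j))"
  by (subst trip_index, auto)

lemma block3_mult:
  fixes A11 :: "'a::comm_ring_1 mat"
  assumes a: "A11 \<in> carrier_mat r1 s1" "A12 \<in> carrier_mat r1 s2" "A13 \<in> carrier_mat r1 s3"
    "A21 \<in> carrier_mat r2 s1" "A22 \<in> carrier_mat r2 s2" "A23 \<in> carrier_mat r2 s3"
    "A31 \<in> carrier_mat r3 s1" "A32 \<in> carrier_mat r3 s2" "A33 \<in> carrier_mat r3 s3"
   and b: "B11 \<in> carrier_mat s1 t1" "B12 \<in> carrier_mat s1 t2" "B13 \<in> carrier_mat s1 t3"
    "B21 \<in> carrier_mat s2 t1" "B22 \<in> carrier_mat s2 t2" "B23 \<in> carrier_mat s2 t3"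
    "B31 \<in> carrier_mat s3 t1" "B32 \<in> carrier_mat s3 t2" "B33 \<in> carrier_mat s3 t3"
  shows "block3 A11 A12 A13 A21 A22 A23 A31 A32 A33 * block3 B11 B12 B13 B21 B22 B23 B31 B32 B33
    = block3 (A11*B11 + A12*B21 + A13*B31) (A11*B12 + A12*B22 + A13*B32) (A11*B13 + A12*B23 + A13*B33)
             (A21*B11 + A22*B21 + A23*B31) (A21*B12 + A22*B22 + A23*B32) (A21*B13 + A22*B23 + A23*B33)
             (A31*B11 + A32*B21 + A33*B31) (A31*B12 + A32*B22 + A33*B32) (A31*B13 + A32*B23 + A33*B33)"
    (is "?A * ?B = ?C")
proof -
  have cA: "?A \<in> carrier_mat (r1+r2+r3) (s1+s2+s3)" by (rule block3_carrier[OF a])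
  have cB: "?B \<in> carrier_mat (s1+s2+s3) (t1+t2+t3)" by (rule block3_carrier[OF b])
  have cC: "?C \<in> carrier_mat (r1+r2+r3) (t1+t2+t3)" by (rule block3_carrier, insert a b, auto)
  show ?thesis
  proof (rule eq_matI)
    fix i j assume "i < dim_row ?C" "j < dim_col ?C"
    hence i: "i < r1+r2+r3" and j: "j < t1+t2+t3" using cC by auto
    have S1: "(\<Sum>k<s1. ?A $$ (i,k) * ?B $$ (k,j)) = (\<Sum>k<s1. (if i<r1 then A11 $$ (i,k) else if i<r1+r2 then A21 $$ (i-r1,k) else A31 $$ (i-r1-r2,k)) * (if j<t1 then B11 $$ (k,j) else if j<t1+t2 then B12 $$ (k,j-t1) else B13 $$ (k,j-t1-t2)))"
      by (rule sum.cong[OF refl], insert i j a b, simp add: block3_index[OF a] block3_index[OF b])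
    have S2: "(\<Sum>k<s2. ?A $$ (i,s1+k) * ?B $$ (s1+k,j)) = (\<Sum>k<s2. (if i<r1 then A12 $$ (i,k) else if i<r1+r2 then A22 $$ (i-r1,k) else A32 $$ (i-r1-r2,k)) * (if j<t1 then B21 $$ (k,j) else if j<t1+t2 then B22 $$ (k,j-t1) else B23 $$ (k,j-t1-t2)))"
      by (rule sum.cong[OF refl], insert i j a b, simp add: block3_index[OF a] block3_index[OF b])
    have S3: "(\<Sum>k<s3. ?A $$ (i,s1+s2+k) * ?B $$ (s1+s2+k,j)) = (\<Sum>k<s3. (if i<r1 then A13 $$ (i,k) else if i<r1+r2 then A23 $$ (i-r1,k) else A33 $$ (i-r1-r2,k)) * (if j<t1 then B31 $$ (k,j) else if j<t1+t2 then B32 $$ (k,j-t1) else B33 $$ (k,j-t1-t2)))"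
      by (rule sum.cong[OF refl], insert i j a b, simp add: block3_index[OF a] block3_index[OF b])
    have C_idx: "?C $$ (i,j) = (if i < r1 then (if j < t1 then (A11*B11 + A12*B21 + A13*B31) $$ (i,j) else if j < t1+t2 then (A11*B12 + A12*B22 + A13*B32) $$ (i,j-t1) else (A11*B13 + A12*B23 + A13*B33) $$ (i,j-t1-t2)) else if i < r1+r2 then (if j < t1 then (A21*B11 + A22*B21 + A23*B31) $$ (i-r1,j) else if j < t1+t2 then (A21*B12 + A22*B22 + A23*B32) $$ (i-r1,j-t1) else (A21*B13 + A22*B23 + A23*B33) $$ (i-r1,j-t1-t2)) else (if j < t1 then (A31*B11 + A32*B21 + A33*B31) $$ (i-r1-r2,j) else if j < t1+t2 then (A31*B12 + A32*B22 + A33*B32) $$ (i-r1-r2,j-t1) else (A31*B13 + A32*B23 + A33*B33) $$ (i-r1-r2,j-t1-t2)))"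
      by (rule block3_index, insert i j a b, auto)
    have "(?A * ?B) $$ (i,j) = (\<Sum>k<(s1+s2)+s3. ?A $$ (i,k) * ?B $$ (k,j))"
      using cA cB i j by (subst mult_index_sum', auto simp: add.assoc)
    also have "\<dots> = (\<Sum>k<s1. ?A $$ (i,k) * ?B $$ (k,j)) + (\<Sum>k<s2. ?A $$ (i,s1+k) * ?B $$ (s1+k,j))
        + (\<Sum>k<s3. ?A $$ (i,s1+s2+k) * ?B $$ (s1+s2+k,j))"
      unfolding sum_lessThan_add_nat by simp
    also have "\<dots> = ?C $$ (i,j)"
    proof -
      consider (i1) "i < r1" | (i2) "\<not> i < r1" "i < r1+r2" | (i3) "\<not> i < r1" "\<not> i < r1+r2" by auto
      then show ?thesis
      proof cases
        case i1 note ii = this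
        have ib: "i < r1" using ii i by auto
        consider (j1) "j < t1" | (j2) "\<not> j < t1" "j < t1+t2" | (j3) "\<not> j < t1" "\<not> j < t1+t2" by auto
        then show ?thesis
        proof cases
          case j1 note jj = this
          have jb: "j < t1" using jj j by auto
          show ?thesis unfolding S1 S2 S3 C_idx using ii jj by (simp only: if_True if_False trip_c[OF a(1) b(1) a(2) b(4) a(3) b(7) ib jb])
        next
          case j2 note jj = this
          have jb: "j - t1 < t2" using jj j by auto
          show ?thesis unfolding S1 S2 S3 C_idx using ii jj by (simp only: if_True if_False trip_c[OF a(1) b(2) a(2) b(5) a(3) b(8) ib jb])
        next
          case j3 note jj = this
          have jb: "j - t1 - t2 < t3" using jj j by auto
          show ?thesis unfolding S1 S2 S3 C_idx using ii jj by (simp only: if_True if_False trip_c[OF a(1) b(3) a(2) b(6) a(3) b(9) ib jb])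
        qed
      next
        case i2 note ii = this
        have ib: "i - r1 < r2" using ii i by auto
        consider (j1) "j < t1" | (j2) "\<not> j < t1" "j < t1+t2" | (j3) "\<not> j < t1" "\<not> j < t1+t2" by auto
        then show ?thesis
        proof cases
          case j1 note jj = this
          have jb: "j < t1" using jj j by auto
          show ?thesis unfolding S1 S2 S3 C_idx using ii jj by (simp only: if_True if_False trip_c[OF a(4) b(1) a(5) b(4) a(6) b(7) ib jb])
        next
          case j2 note jj = this
          have jb: "j - t1 < t2" using jj j by auto
          show ?thesis unfolding S1 S2 S3 C_idx using ii jj by (simp only: if_True if_False trip_c[OF a(4) b(2) a(5) b(5) a(6) b(8) ib jb])
        next
          case j3 note jj = this
          have jb: "j - t1 - t2 < t3" using jj j by auto
          show ?thesis unfolding S1 S2 S3 C_idx using ii jj by (simp only: if_True if_False trip_c[OF a(4) b(3) a(5) b(6) a(6) b(9) ib jb])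
        qed
      next
        case i3 note ii = this
        have ib: "i - r1 - r2 < r3" using ii i by auto
        consider (j1) "j < t1" | (j2) "\<not> j < t1" "j < t1+t2" | (j3) "\<not> j < t1" "\<not> j < t1+t2" by auto
        then show ?thesis
        proof cases
          case j1 note jj = this
          have jb: "j < t1" using jj j by auto
          show ?thesis unfolding S1 S2 S3 C_idx using ii jj by (simp only: if_True if_False trip_c[OF a(7) b(1) a(8) b(4) a(9) b(7) ib jb])
        next
          case j2 note jj = this
          have jb: "j - t1 < t2" using jj j by auto
          show ?thesis unfolding S1 S2 S3 C_idx using ii jj by (simp only: if_True if_False trip_c[OF a(7) b(2) a(8) b(5) a(9) b(8) ib jb])
        next
          case j3 note jj = this
          have jb: "j - t1 - t2 < t3" using jj j by auto
          show ?thesis unfolding S1 S2 S3 C_idx using ii jj by (simp only: if_True if_False trip_c[OF a(7) b(3) a(8) b(6) a(9) b(9) ib jb])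
        qed
      qed
    qed
    finally show "(?A * ?B) $$ (i,j) = ?C $$ (i,j)" .
  qed (insert cA cB cC, auto)
qed



lemma block3_one: "block3 (1\<^sub>m a) (0\<^sub>m a b) (0\<^sub>m a c) (0\<^sub>m b a) (1\<^sub>m b) (0\<^sub>m b c)
   (0\<^sub>m c a) (0\<^sub>m c b) (1\<^sub>m c) = (1\<^sub>m (a+b+c) :: 'a::comm_ring_1 mat)" (is "?L = _")
proof -
  have cL: "?L \<in> carrier_mat (a+b+c) (a+b+c)" by (rule block3_carrier, auto)
  show ?thesis
  proof (rule eq_matI)
    fix i j assume "i < dim_row (1\<^sub>m (a+b+c) :: 'a mat)" "j < dim_col (1\<^sub>m (a+b+c) :: 'a mat)"
    hence ij: "i < a+b+c" "j < a+b+c" by auto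
    show "?L $$ (i,j) = 1\<^sub>m (a+b+c) $$ (i,j)"
      by (subst block3_index[of _ a a _ b _ c _ b _ _ _ c], insert ij, auto)
  qed (insert cL, auto)
qed

lemma block3_map:
  assumes a: "A11 \<in> carrier_mat r1 s1" "A12 \<in> carrier_mat r1 s2" "A13 \<in> carrier_mat r1 s3"
    "A21 \<in> carrier_mat r2 s1" "A22 \<in> carrier_mat r2 s2" "A23 \<in> carrier_mat r2 s3"
    "A31 \<in> carrier_mat r3 s1" "A32 \<in> carrier_mat r3 s2" "A33 \<in> carrier_mat r3 s3"
  shows "map_mat f (block3 A11 A12 A13 A21 A22 A23 A31 A32 A33) =
    block3 (map_mat f A11) (map_mat f A12) (map_mat f A13) (map_mat f A21) (map_mat f A22) (map_mat f A23)
      (map_mat f A31) (map_mat f A32) (map_mat f A33)"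
proof -
  have a': "map_mat f A11 \<in> carrier_mat r1 s1" "map_mat f A12 \<in> carrier_mat r1 s2" "map_mat f A13 \<in> carrier_mat r1 s3"
    "map_mat f A21 \<in> carrier_mat r2 s1" "map_mat f A22 \<in> carrier_mat r2 s2" "map_mat f A23 \<in> carrier_mat r2 s3"
    "map_mat f A31 \<in> carrier_mat r3 s1" "map_mat f A32 \<in> carrier_mat r3 s2" "map_mat f A33 \<in> carrier_mat r3 s3"
    using a by auto
  note c1 = block3_carrier[OF a] and c2 = block3_carrier[OF a']
  show ?thesis
  proof (rule eq_matI)
    fix i j assume "i < dim_row (block3 (map_mat f A11) (map_mat f A12) (map_mat f A13) (map_mat f A21) (map_mat f A22) (map_mat f A23)
      (map_mat f A31) (map_mat f A32) (map_mat f A33))" "j < dim_col (block3 (map_mat f A11) (map_mat f A12) (map_mat f A13) (map_mat f A21) (map_mat f A22) (map_mat f A23)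
      (map_mat f A31) (map_mat f A32) (map_mat f A33))"
    hence ij: "i < r1+r2+r3" "j < s1+s2+s3" using c2 by auto
    show "map_mat f (block3 A11 A12 A13 A21 A22 A23 A31 A32 A33) $$ (i,j) = block3 (map_mat f A11) (map_mat f A12) (map_mat f A13) (map_mat f A21) (map_mat f A22) (map_mat f A23)
      (map_mat f A31) (map_mat f A32) (map_mat f A33) $$ (i,j)"
      using ij c1 a a' by (simp add: block3_index[OF a] block3_index[OF a'])
  qed (insert c1 c2, auto)
qed

lemma block3_lin:
  fixes A11 :: "'a::comm_ring_1 mat"
  assumes a: "A11 \<in> carrier_mat r1 s1" "A12 \<in> carrier_mat r1 s2" "A13 \<in> carrier_mat r1 s3"
    "A21 \<in> carrier_mat r2 s1" "A22 \<in> carrier_mat r2 s2" "A23 \<in> carrier_mat r2 s3"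
    "A31 \<in> carrier_mat r3 s1" "A32 \<in> carrier_mat r3 s2" "A33 \<in> carrier_mat r3 s3"
   and b: "B11 \<in> carrier_mat r1 s1" "B12 \<in> carrier_mat r1 s2" "B13 \<in> carrier_mat r1 s3"
    "B21 \<in> carrier_mat r2 s1" "B22 \<in> carrier_mat r2 s2" "B23 \<in> carrier_mat r2 s3"
    "B31 \<in> carrier_mat r3 s1" "B32 \<in> carrier_mat r3 s2" "B33 \<in> carrier_mat r3 s3"
  shows "block3 A11 A12 A13 A21 A22 A23 A31 A32 A33 - z \<cdot>\<^sub>m block3 B11 B12 B13 B21 B22 B23 B31 B32 B33 =
    block3 (A11 - z \<cdot>\<^sub>m B11) (A12 - z \<cdot>\<^sub>m B12) (A13 - z \<cdot>\<^sub>m B13) (A21 - z \<cdot>\<^sub>m B21) (A22 - z \<cdot>\<^sub>m B22) (A23 - z \<cdot>\<^sub>m B23)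
      (A31 - z \<cdot>\<^sub>m B31) (A32 - z \<cdot>\<^sub>m B32) (A33 - z \<cdot>\<^sub>m B33)"
  (is "?L = ?R")
proof -
  have c: "A11 - z \<cdot>\<^sub>m B11 \<in> carrier_mat r1 s1" "A12 - z \<cdot>\<^sub>m B12 \<in> carrier_mat r1 s2" "A13 - z \<cdot>\<^sub>m B13 \<in> carrier_mat r1 s3"
    "A21 - z \<cdot>\<^sub>m B21 \<in> carrier_mat r2 s1" "A22 - z \<cdot>\<^sub>m B22 \<in> carrier_mat r2 s2" "A23 - z \<cdot>\<^sub>m B23 \<in> carrier_mat r2 s3"
    "A31 - z \<cdot>\<^sub>m B31 \<in> carrier_mat r3 s1" "A32 - z \<cdot>\<^sub>m B32 \<in> carrier_mat r3 s2" "A33 - z \<cdot>\<^sub>m B33 \<in> carrier_mat r3 s3"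
    using a b by auto
  note c1 = block3_carrier[OF a] and c2 = block3_carrier[OF b] and c3 = block3_carrier[OF c]
  show ?thesis
  proof (rule eq_matI)
    fix i j assume "i < dim_row ?R" "j < dim_col ?R"
    hence ij: "i < r1+r2+r3" "j < s1+s2+s3" using c3 by auto
    show "?L $$ (i,j) = ?R $$ (i,j)"
      using ij c1 c2 a b c by (simp add: block3_index[OF a] block3_index[OF b] block3_index[OF c])
  qed (insert c1 c2 c3, auto)
qed

lemma det_block3:
  fixes A11 :: "'a::idom mat"
  assumes "A11 \<in> carrier_mat n1 n1" "A12 \<in> carrier_mat n1 n2" "A22 \<in> carrier_mat n2 n2"
    "A32 \<in> carrier_mat n3 n2" "A33 \<in> carrier_mat n3 n3"
  shows "det (block3 A11 A12 (0\<^sub>m n1 n3) (0\<^sub>m n2 n1) A22 (0\<^sub>m n2 n3) (0\<^sub>m n3 n1) A32 A33)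
    = det A11 * det A22 * det A33"
proof -
  have z: "0\<^sub>m n1 n3 @\<^sub>r 0\<^sub>m n2 n3 = (0\<^sub>m (n1+n2) n3 :: 'a mat)"
    by (rule eq_matI, auto simp: append_rows_def)
  have "det (block3 A11 A12 (0\<^sub>m n1 n3) (0\<^sub>m n2 n1) A22 (0\<^sub>m n2 n3) (0\<^sub>m n3 n1) A32 A33)
     = det (four_block_mat A11 A12 (0\<^sub>m n2 n1) A22) * det A33"
    unfolding block3_def z
    by (rule det_four_block_mat_upper_right_zero[of _ "n1+n2"], insert assms, auto simp: hcat_def)
  also have "det (four_block_mat A11 A12 (0\<^sub>m n2 n1) A22) = det A11 * det A22"
    by (rule det_four_block_mat_lower_left_zero, insert assms, auto)
  finally show ?thesis .
qed

lemma inv_mat_unique: fixes A :: "'a::field mat"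
  assumes A: "A \<in> carrier_mat n n" and B: "B \<in> carrier_mat n n" and AB: "A * B = 1\<^sub>m n"
  shows "inv_mat A = B"
proof -
  have BA: "B * A = 1\<^sub>m n" by (rule mat_mult_left_right_inverse[OF A B AB])
  show ?thesis unfolding inv_mat_def
  proof (rule the_equality)
    show "B \<in> carrier_mat (dim_row A) (dim_row A) \<and> A * B = 1\<^sub>m (dim_row A) \<and> B * A = 1\<^sub>m (dim_row A)"
      using A B AB BA by auto
    fix C assume C: "C \<in> carrier_mat (dim_row A) (dim_row A) \<and> A * C = 1\<^sub>m (dim_row A) \<and> C * A = 1\<^sub>m (dim_row A)"
    hence C1: "C \<in> carrier_mat n n" "C * A = 1\<^sub>m n" using A by auto
    have "C = C * (A * B)" using C1 by (simp add: AB)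
    also have "\<dots> = (C * A) * B" using assoc_mult_mat[OF C1(1) A B] by simp
    also have "\<dots> = B" using B C1 by simp
    finally show "C = B" .
  qed
qed

lemma det_ne0_inv: fixes A :: "'a::field mat"
  assumes A: "A \<in> carrier_mat n n" and d: "det A \<noteq> 0"
  shows "inv_mat A \<in> carrier_mat n n \<and> A * inv_mat A = 1\<^sub>m n \<and> inv_mat A * A = 1\<^sub>m n"
proof -
  let ?R = "ring_mat TYPE('a) n undefined"
  from det_non_zero_imp_unit[OF A d]
  obtain B where B: "B \<in> carrier_mat n n" "A * B = 1\<^sub>m n"
    unfolding Units_def by (auto simp: ring_mat_def)
  have "inv_mat A = B" by (rule inv_mat_unique[OF A B(1) B(2)])
  with B mat_mult_left_right_inverse[OF A B(1) B(2)] show ?thesis by auto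
qed

lemma invertible_det_ne0: fixes A :: "'a::field mat"
  assumes A: "A \<in> carrier_mat n n" and "invertible_mat A"
  shows "det A \<noteq> 0"
proof -
  from assms obtain B where "A * B = 1\<^sub>m n" "B * A = 1\<^sub>m (dim_row B)"
    unfolding invertible_mat_def inverts_mat_def by auto
  moreover hence "B \<in> carrier_mat n n" using A
    by (metis carrier_matD carrier_matI index_mult_mat(2,3) index_one_mat(2,3))
  ultimately show ?thesis using det_mult[OF A, of B] A by auto
qed



lemma lin_self: "(M :: 'a::comm_ring_1 mat) - z \<cdot>\<^sub>m M = (1 - z) \<cdot>\<^sub>m M"
  by (rule eq_matI, auto simp: algebra_simps)

lemma zero_lin: "map_mat complex_of_real (0\<^sub>m a b) - z \<cdot>\<^sub>m map_mat complex_of_real (0\<^sub>m a b) = 0\<^sub>m a b"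
  by (rule eq_matI, auto)

lemma poly_char_poly_det: assumes M: "(M :: 'a::field mat) \<in> carrier_mat N N"
  shows "poly (char_poly M) z = (-1) ^ N * det (M - z \<cdot>\<^sub>m 1\<^sub>m N)"
proof -
  have "- char_matrix M z = (-1) \<cdot>\<^sub>m (M - z \<cdot>\<^sub>m 1\<^sub>m N)"
    unfolding char_matrix_def using M by (intro eq_matI, auto)
  hence "det (- char_matrix M z) = (-1) ^ N * det (M - z \<cdot>\<^sub>m 1\<^sub>m N)" using M by simp
  thus ?thesis using char_poly_matrix[OF M] by simp
qed

lemma det_shift: assumes A: "(A :: 'a::comm_ring_1 mat) \<in> carrier_mat N N" and M: "M \<in> carrier_mat N N"
  and AM: "A * M = L"
  shows "det A * det (M - z \<cdot>\<^sub>m 1\<^sub>m N) = det (L - z \<cdot>\<^sub>m A)"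
proof -
  have "A * (M - z \<cdot>\<^sub>m 1\<^sub>m N) = A * M - A * (z \<cdot>\<^sub>m 1\<^sub>m N)"
    by (rule mult_minus_distrib_mat[OF A M], auto)
  also have "A * (z \<cdot>\<^sub>m 1\<^sub>m N) = z \<cdot>\<^sub>m A"
    using mult_smult_distrib[OF A, of "1\<^sub>m N" N z] A by simp
  finally have "A * (M - z \<cdot>\<^sub>m 1\<^sub>m N) = L - z \<cdot>\<^sub>m A" using AM by simp
  moreover have "det (A * (M - z \<cdot>\<^sub>m 1\<^sub>m N)) = det A * det (M - z \<cdot>\<^sub>m 1\<^sub>m N)"
    by (rule det_mult[OF A], insert M, auto)
  ultimately show ?thesis by simp
qed

theorem mainTheorem6:
  fixes m n :: nat
    and Ru Rz Luu Luz Lzz B :: "real mat"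
    and Lzu Lyy H K K1 K2 P4 :: "real mat"
  assumes "m \<ge> 1" and "n \<ge> 1"
    and Ru: "Ru \<in> carrier_mat m m" and "invertible_mat Ru"
    and Rz: "Rz \<in> carrier_mat m n"
    and Luu: "Luu \<in> carrier_mat m m" and "Luu\<^sup>T = Luu"
    and Luz: "Luz \<in> carrier_mat m n"
    and Lzz: "Lzz \<in> carrier_mat n n" and "Lzz\<^sup>T = Lzz"
    and B: "B \<in> carrier_mat n n" and "invertible_mat B"
    and "Lzu = Luz\<^sup>T"
    and "Lyy = Luz - Luu * inv_mat Ru * Rz"
    and "H = Lzz - Lzu * inv_mat Ru * Rz - Rz\<^sup>T * (inv_mat Ru)\<^sup>T * Luz
              + Rz\<^sup>T * (inv_mat Ru)\<^sup>T * Luu * inv_mat Ru * Rz"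
    and "K = block3 Luu Luz Ru\<^sup>T  Lzu Lzz Rz\<^sup>T  Ru Rz (0\<^sub>m m m)"
    and "K1 = block3 (Luu * inv_mat Ru) (0\<^sub>m m n) (1\<^sub>m m)
                     (Lzu * inv_mat Ru) (1\<^sub>m n) (Rz\<^sup>T * (inv_mat Ru)\<^sup>T)
                     (1\<^sub>m m) (0\<^sub>m m n) (0\<^sub>m m m)"
    and "K2 = block3 Ru Rz (0\<^sub>m m m)  (0\<^sub>m n m) B (0\<^sub>m n m)  (0\<^sub>m m m) Lyy Ru\<^sup>T"
    and "P4 = K1 * K2"
  shows "(\<forall>z::complex.
            det (map_mat complex_of_real (inv_mat P4 * K) - z \<cdot>\<^sub>m 1\<^sub>m (2*m+n))
            = (1 - z) ^ (2*m) * det (map_mat complex_of_real (inv_mat B * H) - z \<cdot>\<^sub>m 1\<^sub>m n))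
         \<and> char_poly (map_mat complex_of_real (inv_mat P4 * K))
            = [:-1, 1:] ^ (2*m) * char_poly (map_mat complex_of_real (inv_mat B * H))"
proof -
  note Lzu_def = \<open>Lzu = Luz\<^sup>T\<close>
  note Lyy_def = \<open>Lyy = Luz - Luu * inv_mat Ru * Rz\<close>
  note H_def = \<open>H = Lzz - Lzu * inv_mat Ru * Rz - Rz\<^sup>T * (inv_mat Ru)\<^sup>T * Luz
              + Rz\<^sup>T * (inv_mat Ru)\<^sup>T * Luu * inv_mat Ru * Rz\<close>
  define X where "X = inv_mat Ru"
  have dRu: "det Ru \<noteq> 0" by (rule invertible_det_ne0[OF Ru], fact)
  from det_ne0_inv[OF Ru dRu] have X: "X \<in> carrier_mat m m" and RuX: "Ru * X = 1\<^sub>m m" and XRu: "X * Ru = 1\<^sub>m m"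
    unfolding X_def by auto
  have RuT: "Ru\<^sup>T \<in> carrier_mat m m" using Ru by auto
  have RzT: "Rz\<^sup>T \<in> carrier_mat n m" using Rz by auto
  have XT: "X\<^sup>T \<in> carrier_mat m m" using X by auto
  have RuTXT: "Ru\<^sup>T * X\<^sup>T = 1\<^sub>m m"
    using transpose_mult[OF X Ru] XRu by simp
  have XTRuT: "X\<^sup>T * Ru\<^sup>T = 1\<^sub>m m"
    using transpose_mult[OF Ru X] RuX by simp
  have Lzu: "Lzu \<in> carrier_mat n m" using Luz Lzu_def by auto
  define A where "A = Luu * X"
  define C where "C = Lzu * X"
  define D where "D = Rz\<^sup>T * X\<^sup>T"
  have cA: "A \<in> carrier_mat m m" using Luu X A_def by auto
  have cC: "C \<in> carrier_mat n m" using Lzu X C_def by auto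
  have cD: "D \<in> carrier_mat n m" using RzT XT D_def by auto
  have Lyy: "Lyy = Luz - A * Rz" using Lyy_def A_def X_def by simp
  have cLyy: "Lyy \<in> carrier_mat m n" using Lyy Luz cA Rz by auto
  have H: "H = Lzz - C * Rz - D * Luz + D * Luu * X * Rz"
    using H_def unfolding C_def D_def X_def by (simp add: assoc_mult_mat)
  have cH: "H \<in> carrier_mat n n" using H Lzz cC Rz cD Luz Luu X by auto
  have K1: "K1 = block3 A (0\<^sub>m m n) (1\<^sub>m m) C (1\<^sub>m n) D (1\<^sub>m m) (0\<^sub>m m n) (0\<^sub>m m m)"
    using \<open>K1 = _\<close> unfolding A_def C_def D_def X_def by simp
  define K2H where "K2H = block3 Ru Rz (0\<^sub>m m m)  (0\<^sub>m n m) H (0\<^sub>m n m)  (0\<^sub>m m m) Lyy Ru\<^sup>T"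
  have cK1: "K1 \<in> carrier_mat (m+n+m) (m+n+m)" unfolding K1 by (rule block3_carrier, insert cA cC cD, auto)
  have cK2: "K2 \<in> carrier_mat (m+n+m) (m+n+m)" unfolding \<open>K2 = _\<close> by (rule block3_carrier, insert Ru Rz B cLyy, auto)
  have cK2H: "K2H \<in> carrier_mat (m+n+m) (m+n+m)" unfolding K2H_def by (rule block3_carrier, insert Ru Rz cH cLyy, auto)
  have cK: "K \<in> carrier_mat (m+n+m) (m+n+m)" unfolding \<open>K = _\<close> by (rule block3_carrier, insert Ru Rz Luu Luz Lzz Lzu, auto)
  have KK: "K = K1 * K2H"
  proof -
    have "K1 * K2H = block3 (A * Ru + 0\<^sub>m m n * 0\<^sub>m n m + 1\<^sub>m m * 0\<^sub>m m m)
      (A * Rz + 0\<^sub>m m n * H + 1\<^sub>m m * Lyy) (A * 0\<^sub>m m m + 0\<^sub>m m n * 0\<^sub>m n m + 1\<^sub>m m * Ru\<^sup>T)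
      (C * Ru + 1\<^sub>m n * 0\<^sub>m n m + D * 0\<^sub>m m m) (C * Rz + 1\<^sub>m n * H + D * Lyy) (C * 0\<^sub>m m m + 1\<^sub>m n * 0\<^sub>m n m + D * Ru\<^sup>T)
      (1\<^sub>m m * Ru + 0\<^sub>m m n * 0\<^sub>m n m + 0\<^sub>m m m * 0\<^sub>m m m) (1\<^sub>m m * Rz + 0\<^sub>m m n * H + 0\<^sub>m m m * Lyy)
      (1\<^sub>m m * 0\<^sub>m m m + 0\<^sub>m m n * 0\<^sub>m n m + 0\<^sub>m m m * Ru\<^sup>T)"
      unfolding K1 K2H_def
      by (rule block3_mult[where ?r1.0=m and ?r2.0=n and ?r3.0=m and ?s1.0=m and ?s2.0=n and ?s3.0=m and ?t1.0=m and ?t2.0=n and ?t3.0=m], insert cA cC cD Ru Rz cH cLyy, auto)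
    also have "\<dots> = K"
    proof -
      have e11: "A * Ru + 0\<^sub>m m n * 0\<^sub>m n m + 1\<^sub>m m * 0\<^sub>m m m = Luu"
        using Luu X Ru XRu unfolding A_def by (simp add: assoc_mult_mat)
      have e12: "A * Rz + 0\<^sub>m m n * H + 1\<^sub>m m * Lyy = Luz"
        unfolding Lyy using cA Rz Luz cH by (intro eq_matI, auto)
      have e13: "A * 0\<^sub>m m m + 0\<^sub>m m n * 0\<^sub>m n m + 1\<^sub>m m * Ru\<^sup>T = Ru\<^sup>T"
        using cA RuT by simp
      have e21: "C * Ru + 1\<^sub>m n * 0\<^sub>m n m + D * 0\<^sub>m m m = Lzu"
        using Lzu X Ru XRu cD unfolding C_def by (simp add: assoc_mult_mat)
      have DLyy: "D * Lyy = D * Luz - D * Luu * X * Rz"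
      proof -
        have "D * Lyy = D * Luz - D * (A * Rz)" unfolding Lyy
          by (rule mult_minus_distrib_mat[OF cD Luz], insert cA Rz, auto)
        also have "D * (A * Rz) = D * A * Rz" using assoc_mult_mat[OF cD cA Rz] by simp
        also have "D * A = D * Luu * X" unfolding A_def using assoc_mult_mat[OF cD Luu X] by simp
        finally show ?thesis .
      qed
      have e22: "C * Rz + 1\<^sub>m n * H + D * Lyy = Lzz"
        unfolding DLyy H using cC Rz cD Luz Luu X Lzz by (intro eq_matI, auto)
      have e23: "C * 0\<^sub>m m m + 1\<^sub>m n * 0\<^sub>m n m + D * Ru\<^sup>T = Rz\<^sup>T"
        using cC cD RuT RzT XT XTRuT unfolding D_def by (simp add: assoc_mult_mat)
      have e31: "1\<^sub>m m * Ru + 0\<^sub>m m n * 0\<^sub>m n m + 0\<^sub>m m m * 0\<^sub>m m m = Ru" using Ru by simp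
      have e32: "1\<^sub>m m * Rz + 0\<^sub>m m n * H + 0\<^sub>m m m * Lyy = Rz" using Rz cH cLyy by simp
      have e33: "1\<^sub>m m * 0\<^sub>m m m + 0\<^sub>m m n * 0\<^sub>m n m + 0\<^sub>m m m * Ru\<^sup>T = 0\<^sub>m m m" using RuT by simp
      show ?thesis unfolding e11 e12 e13 e21 e22 e23 e31 e32 e33 \<open>K = _\<close> ..
    qed
    finally show ?thesis by simp
  qed

  define K1i where "K1i = block3 (0\<^sub>m m m) (0\<^sub>m m n) (1\<^sub>m m) (- D) (1\<^sub>m n) (D * A - C) (1\<^sub>m m) (0\<^sub>m m n) (- A)"
  have cDA: "D * A - C \<in> carrier_mat n m" using cD cA cC by auto
  have cK1i: "K1i \<in> carrier_mat (m+n+m) (m+n+m)" unfolding K1i_def by (rule block3_carrier, insert cA cD cDA, auto)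
  have K1K1i: "K1 * K1i = 1\<^sub>m (m+n+m)"
  proof -
    have "K1 * K1i = block3
      (A * 0\<^sub>m m m + 0\<^sub>m m n * (- D) + 1\<^sub>m m * 1\<^sub>m m) (A * 0\<^sub>m m n + 0\<^sub>m m n * 1\<^sub>m n + 1\<^sub>m m * 0\<^sub>m m n)
      (A * 1\<^sub>m m + 0\<^sub>m m n * (D * A - C) + 1\<^sub>m m * (- A))
      (C * 0\<^sub>m m m + 1\<^sub>m n * (- D) + D * 1\<^sub>m m) (C * 0\<^sub>m m n + 1\<^sub>m n * 1\<^sub>m n + D * 0\<^sub>m m n)
      (C * 1\<^sub>m m + 1\<^sub>m n * (D * A - C) + D * (- A))
      (1\<^sub>m m * 0\<^sub>m m m + 0\<^sub>m m n * (- D) + 0\<^sub>m m m * 1\<^sub>m m) (1\<^sub>m m * 0\<^sub>m m n + 0\<^sub>m m n * 1\<^sub>m n + 0\<^sub>m m m * 0\<^sub>m m n)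
      (1\<^sub>m m * 1\<^sub>m m + 0\<^sub>m m n * (D * A - C) + 0\<^sub>m m m * (- A))"
      unfolding K1 K1i_def by (rule block3_mult[where ?r1.0=m and ?r2.0=n and ?r3.0=m and ?s1.0=m and ?s2.0=n and ?s3.0=m and ?t1.0=m and ?t2.0=n and ?t3.0=m], insert cA cC cD cDA, auto)
    also have "\<dots> = block3 (1\<^sub>m m) (0\<^sub>m m n) (0\<^sub>m m m) (0\<^sub>m n m) (1\<^sub>m n) (0\<^sub>m n m) (0\<^sub>m m m) (0\<^sub>m m n) (1\<^sub>m m)"
    proof -
      have z1: "0\<^sub>m m n * (- D) = 0\<^sub>m m m" by (rule left_mult_zero_mat, insert cD, auto)
      have z2: "0\<^sub>m m n * (D * A - C) = 0\<^sub>m m m" by (rule left_mult_zero_mat[OF cDA])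
      have z3: "0\<^sub>m m m * (- A) = 0\<^sub>m m m" by (rule left_mult_zero_mat, insert cA, auto)
      have f11: "A * 0\<^sub>m m m + 0\<^sub>m m n * (- D) + 1\<^sub>m m * 1\<^sub>m m = 1\<^sub>m m" unfolding z1 using cA cD by (intro eq_matI, auto)
      have f12: "A * 0\<^sub>m m n + 0\<^sub>m m n * 1\<^sub>m n + 1\<^sub>m m * 0\<^sub>m m n = 0\<^sub>m m n" using cA by (intro eq_matI, auto)
      have f13: "A * 1\<^sub>m m + 0\<^sub>m m n * (D * A - C) + 1\<^sub>m m * (- A) = 0\<^sub>m m m" unfolding z2 using cA cDA by (intro eq_matI, auto)
      have f21: "C * 0\<^sub>m m m + 1\<^sub>m n * (- D) + D * 1\<^sub>m m = 0\<^sub>m n m" using cC cD by (intro eq_matI, auto)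
      have f22: "C * 0\<^sub>m m n + 1\<^sub>m n * 1\<^sub>m n + D * 0\<^sub>m m n = 1\<^sub>m n" using cC cD by (intro eq_matI, auto)
      have DmA: "D * (- A) = - (D * A)" using cD cA by simp
      have f23: "C * 1\<^sub>m m + 1\<^sub>m n * (D * A - C) + D * (- A) = 0\<^sub>m n m" unfolding DmA
        using cC cD cA by (intro eq_matI, auto)
      have f31: "1\<^sub>m m * 0\<^sub>m m m + 0\<^sub>m m n * (- D) + 0\<^sub>m m m * 1\<^sub>m m = 0\<^sub>m m m" unfolding z1 using cD by (intro eq_matI, auto)
      have f32: "1\<^sub>m m * 0\<^sub>m m n + 0\<^sub>m m n * 1\<^sub>m n + 0\<^sub>m m m * 0\<^sub>m m n = 0\<^sub>m m n" by (intro eq_matI, auto)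
      have f33: "1\<^sub>m m * 1\<^sub>m m + 0\<^sub>m m n * (D * A - C) + 0\<^sub>m m m * (- A) = 1\<^sub>m m" unfolding z2 z3 using cDA cA by (intro eq_matI, auto)
      show ?thesis unfolding f11 f12 f13 f21 f22 f23 f31 f32 f33 ..
    qed
    also have "\<dots> = 1\<^sub>m (m+n+m)" by (rule block3_one)
    finally show ?thesis .
  qed
  have dK1: "det K1 \<noteq> 0"
    using det_mult[OF cK1 cK1i] K1K1i by auto
  have dB: "det B \<noteq> 0" by (rule invertible_det_ne0[OF B], fact)
  have dK2: "det K2 = det Ru * det B * det Ru"
    unfolding \<open>K2 = _\<close> using det_block3[OF Ru Rz B cLyy RuT] det_transpose[OF Ru] by simp
  have cP4: "P4 \<in> carrier_mat (m+n+m) (m+n+m)" using cK1 cK2 \<open>P4 = K1 * K2\<close> by auto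
  have dP4: "det P4 \<noteq> 0" using det_mult[OF cK1 cK2] \<open>P4 = K1 * K2\<close> dK1 dK2 dB dRu by auto
  from det_ne0_inv[OF cP4 dP4] have ciP: "inv_mat P4 \<in> carrier_mat (m+n+m) (m+n+m)"
    and iPP: "inv_mat P4 * P4 = 1\<^sub>m (m+n+m)" by auto
  define Q where "Q = inv_mat P4 * K"
  have cQ: "Q \<in> carrier_mat (m+n+m) (m+n+m)" using ciP cK Q_def by auto
  have cIK1: "inv_mat P4 * K1 \<in> carrier_mat (m+n+m) (m+n+m)" using ciP cK1 by auto
  have "(inv_mat P4 * K1) * K2 = 1\<^sub>m (m+n+m)"
    using iPP assoc_mult_mat[OF ciP cK1 cK2] \<open>P4 = K1 * K2\<close> by simp
  hence K2IK1: "K2 * (inv_mat P4 * K1) = 1\<^sub>m (m+n+m)" by (rule mat_mult_left_right_inverse[OF cIK1 cK2])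
  have K2Q: "K2 * Q = K2H"
  proof -
    have "K2 * Q = K2 * ((inv_mat P4 * K1) * K2H)"
      unfolding Q_def KK using assoc_mult_mat[OF ciP cK1 cK2H] by simp
    also have "\<dots> = (K2 * (inv_mat P4 * K1)) * K2H"
      using assoc_mult_mat[OF cK2 cIK1 cK2H] by simp
    also have "\<dots> = K2H" using K2IK1 cK2H by simp
    finally show ?thesis .
  qed
  define G where "G = inv_mat B * H"
  from det_ne0_inv[OF B dB] have ciB: "inv_mat B \<in> carrier_mat n n" and BiB: "B * inv_mat B = 1\<^sub>m n" by auto
  have cG: "G \<in> carrier_mat n n" using ciB cH G_def by auto
  have BG: "B * G = H" unfolding G_def using assoc_mult_mat[OF B ciB cH] BiB cH by simp
  let ?c = "map_mat complex_of_real"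
  have N: "2*m+n = m+n+m" by simp
  have main: "det (?c Q - z \<cdot>\<^sub>m 1\<^sub>m (m+n+m)) = (1 - z) ^ (2*m) * det (?c G - z \<cdot>\<^sub>m 1\<^sub>m n)" for z :: complex
  proof -
    have s1: "det (?c K2) * det (?c Q - z \<cdot>\<^sub>m 1\<^sub>m (m+n+m)) = det (?c K2H - z \<cdot>\<^sub>m ?c K2)"
    proof (rule det_shift)
      show "?c K2 * ?c Q = ?c K2H" unfolding K2Q[symmetric] by (rule of_real_hom.mat_hom_mult[OF cK2 cQ, symmetric])
    qed (insert cK2 cQ, auto)
    have s2: "det (?c B) * det (?c G - z \<cdot>\<^sub>m 1\<^sub>m n) = det (?c H - z \<cdot>\<^sub>m ?c B)"
    proof (rule det_shift)
      show "?c B * ?c G = ?c H" unfolding BG[symmetric] by (rule of_real_hom.mat_hom_mult[OF B cG, symmetric])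
    qed (insert B cG, auto)
    have E: "?c K2H - z \<cdot>\<^sub>m ?c K2 = block3 ((1-z) \<cdot>\<^sub>m ?c Ru) ((1-z) \<cdot>\<^sub>m ?c Rz) (0\<^sub>m m m)
       (0\<^sub>m n m) (?c H - z \<cdot>\<^sub>m ?c B) (0\<^sub>m n m) (0\<^sub>m m m) ((1-z) \<cdot>\<^sub>m ?c Lyy) ((1-z) \<cdot>\<^sub>m ?c (Ru\<^sup>T))"
    proof -
      have "?c K2H - z \<cdot>\<^sub>m ?c K2 = block3 (?c Ru - z \<cdot>\<^sub>m ?c Ru) (?c Rz - z \<cdot>\<^sub>m ?c Rz) (?c (0\<^sub>m m m) - z \<cdot>\<^sub>m ?c (0\<^sub>m m m))
        (?c (0\<^sub>m n m) - z \<cdot>\<^sub>m ?c (0\<^sub>m n m)) (?c H - z \<cdot>\<^sub>m ?c B) (?c (0\<^sub>m n m) - z \<cdot>\<^sub>m ?c (0\<^sub>m n m))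
        (?c (0\<^sub>m m m) - z \<cdot>\<^sub>m ?c (0\<^sub>m m m)) (?c Lyy - z \<cdot>\<^sub>m ?c Lyy) (?c (Ru\<^sup>T) - z \<cdot>\<^sub>m ?c (Ru\<^sup>T))"
        unfolding K2H_def \<open>K2 = _\<close>
        apply (subst block3_map[of _ m m _ n _ m _ n _ _ _ m], insert Ru Rz cH cLyy RuT, auto)[1]
        apply (subst block3_map[of _ m m _ n _ m _ n _ _ _ m], insert Ru Rz B cLyy RuT, auto)[1]
        by (rule block3_lin[of _ m m _ n _ m _ n _ _ _ m], insert Ru Rz B cH cLyy RuT, auto)
      also have "\<dots> = block3 ((1-z) \<cdot>\<^sub>m ?c Ru) ((1-z) \<cdot>\<^sub>m ?c Rz) (0\<^sub>m m m)
       (0\<^sub>m n m) (?c H - z \<cdot>\<^sub>m ?c B) (0\<^sub>m n m) (0\<^sub>m m m) ((1-z) \<cdot>\<^sub>m ?c Lyy) ((1-z) \<cdot>\<^sub>m ?c (Ru\<^sup>T))"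
        unfolding zero_lin unfolding lin_self ..
      finally show ?thesis .
    qed
    have dE: "det (?c K2H - z \<cdot>\<^sub>m ?c K2) = ((1-z)^m * det (?c Ru)) * det (?c H - z \<cdot>\<^sub>m ?c B) * ((1-z)^m * det (?c (Ru\<^sup>T)))"
      unfolding E
      by (subst det_block3[where ?n1.0=m and ?n2.0=n and ?n3.0=m], insert Ru Rz B cH cLyy RuT, auto)
    have dc: "det (?c K2) = complex_of_real (det Ru) * complex_of_real (det B) * complex_of_real (det Ru)"
      using dK2 by simp
    have dRuT: "det (?c (Ru\<^sup>T)) = complex_of_real (det Ru)" using det_transpose[OF Ru] by simp
    have ne: "complex_of_real (det Ru) * complex_of_real (det B) * complex_of_real (det Ru) \<noteq> 0"
      using dRu dB by simp
    have "complex_of_real (det Ru) * complex_of_real (det B) * complex_of_real (det Ru) * det (?c Q - z \<cdot>\<^sub>m 1\<^sub>m (m+n+m))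
        = complex_of_real (det Ru) * complex_of_real (det B) * complex_of_real (det Ru) * ((1 - z) ^ (2*m) * det (?c G - z \<cdot>\<^sub>m 1\<^sub>m n))"
    proof -
      have "complex_of_real (det Ru) * complex_of_real (det B) * complex_of_real (det Ru) * det (?c Q - z \<cdot>\<^sub>m 1\<^sub>m (m+n+m))
        = ((1-z)^m * complex_of_real (det Ru)) * (complex_of_real (det B) * det (?c G - z \<cdot>\<^sub>m 1\<^sub>m n)) * ((1-z)^m * complex_of_real (det Ru))"
        using s1 s2 dE dc dRuT by simp
      moreover have p: "(1-z)^(2*m) = (1-z)^m * (1-z)^m" by (simp add: power_add mult_2)
      ultimately show ?thesis unfolding p by (simp add: mult_ac)
    qed
    thus ?thesis using ne by simp
  qed
  show ?thesis
  proof
    show "\<forall>z::complex. det (?c (inv_mat P4 * K) - z \<cdot>\<^sub>m 1\<^sub>m (2*m+n)) = (1 - z) ^ (2*m) * det (?c (inv_mat B * H) - z \<cdot>\<^sub>m 1\<^sub>m n)"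
      using main unfolding Q_def G_def N by simp
    have cQc: "?c Q \<in> carrier_mat (m+n+m) (m+n+m)" using cQ by simp
    have cGc: "?c G \<in> carrier_mat n n" using cG by simp
    have "poly (char_poly (?c Q)) = poly ([:-1, 1:] ^ (2*m) * char_poly (?c G))"
    proof
      fix z :: complex
      have "poly (char_poly (?c Q)) z = (-1) ^ (m+n+m) * ((1 - z) ^ (2*m) * det (?c G - z \<cdot>\<^sub>m 1\<^sub>m n))"
        unfolding poly_char_poly_det[OF cQc] main ..
      also have "\<dots> = (z - 1) ^ (2*m) * ((-1) ^ n * det (?c G - z \<cdot>\<^sub>m 1\<^sub>m n))"
      proof -
        have e0: "(-1::complex) ^ (2*m) = 1" by (simp add: power_mult)
        have e1: "(-1::complex) ^ (m+n+m) = (-1) ^ (2*m) * (-1) ^ n" by (simp add: power_add mult_2 ac_simps)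
        have sq: "(1 - z) ^ 2 = (z - 1) ^ 2" by (simp add: power2_eq_square algebra_simps)
        have e2: "(1 - z) ^ (2*m) = (z - 1) ^ (2*m)" unfolding power_mult sq ..
        show ?thesis unfolding e1 e0 e2 by (simp add: mult_ac)
      qed
      also have "\<dots> = poly ([:-1, 1:] ^ (2*m) * char_poly (?c G)) z"
        by (simp add: poly_power poly_char_poly_det[OF cGc])
      finally show "poly (char_poly (?c Q)) z = poly ([:-1, 1:] ^ (2*m) * char_poly (?c G)) z" .
    qed
    thus "char_poly (?c (inv_mat P4 * K)) = [:-1, 1:] ^ (2*m) * char_poly (?c (inv_mat B * H))"
      unfolding Q_def G_def poly_eq_poly_eq_iff .
  qed
qed


end
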